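(* Let $\gamma=\{t+iy(t):t\in[a,b]\}$, $-\infty<a<b<\infty$, be the graph of a Lipschitz function $y:[a,b]\to\mathbb{R}$. Suppose $\varphi$ is measurable on $\gamma$ and $\int_\gamma e^{-\varphi}\,ds<\infty$. Then polynomials are dense in $L^2(\gamma,\varphi)$: for every $f\in L^2(\gamma,\varphi)$ and $\varepsilon>0$ there is a holomorphic polynomial $P$ with $\int_\gamma|f-P|^2e^{-\varphi}ds<\varepsilon$.
   Context: $ds$ is arc length on $\gamma$. $L^2(\gamma,\varphi)$ is the space of measurable functions $f$ on $\gamma$ with $\int_\gamma|f|^2e^{-\varphi}ds<\infty$. *)

theory Defs
  imports "HOL-Analysis.Analysis" "HOL-Computational_Algebra.Polynomial"
begin

definition graph_param :: "(real \<Rightarrow> real) \<Rightarrow> real \<Rightarrow> complex" where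
  "graph_param y t = Complex t (y t)"

definition polygonal_length :: "(real \<Rightarrow> complex) \<Rightarrow> (nat \<Rightarrow> real) \<Rightarrow> nat \<Rightarrow> real" where
  "polygonal_length g p n = (\<Sum>i<n. cmod (g (p (Suc i)) - g (p i)))"

definition arc_length :: "(real \<Rightarrow> complex) \<Rightarrow> real \<Rightarrow> real \<Rightarrow> real" where
  "arc_length g u v =
     (SUP pn \<in> {(p, n). p 0 = u \<and> p n = v \<and> (\<forall>i<n. p i \<le> p (Suc i))}.
        polygonal_length g (fst pn) (snd pn))"

definition arc_length_fun :: "(real \<Rightarrow> real) \<Rightarrow> real \<Rightarrow> real \<Rightarrow> real \<Rightarrow> real" where
  "arc_length_fun y a b t = arc_length (graph_param y) a (min b (max a t))"

text \<open>Arc-length measure ds on gamma, as a measure on the complex plane: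
  the Lebesgue-Stieltjes measure ds of the arc-length function on [a,b],
  pushed forward to gamma by the parametrisation.\<close>
definition arc_measure :: "(real \<Rightarrow> real) \<Rightarrow> real \<Rightarrow> real \<Rightarrow> complex measure" where
  "arc_measure y a b =
     distr (restrict_space (interval_measure (arc_length_fun y a b)) {a..b}) borel (graph_param y)"

end

theory Submission
  imports Defs
begin

definition unif :: "complex set \<Rightarrow> (complex \<Rightarrow> complex) \<Rightarrow> bool" where
  "unif K g \<longleftrightarrow> (\<forall>e>0. \<exists>P. \<forall>z\<in>K. cmod (g z - poly P z) \<le> e)"

lemma unif_cong:
  assumes "unif K f" "\<And>z. z \<in> K \<Longrightarrow> f z = g z" shows "unif K g"
  using assms unfolding unif_def by auto

lemma unif_poly: "unif K (poly P)"
  unfolding unif_def by (metis diff_self norm_zero order_less_imp_le)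

lemma unif_const: "unif K (\<lambda>z. c)"
  by (rule unif_cong[OF unif_poly[of K "[:c:]"]]) simp

lemma unif_id: "unif K (\<lambda>z. z)"
  by (rule unif_cong[OF unif_poly[of K "[:0,1:]"]]) simp

lemma unif_add:
  assumes "unif K f" "unif K g" shows "unif K (\<lambda>z. f z + g z)"
  unfolding unif_def
proof (intro allI impI)
  fix e :: real assume e: "e > 0"
  obtain P where P: "\<forall>z\<in>K. cmod (f z - poly P z) \<le> e/2" using assms(1) e unfolding unif_def by (meson half_gt_zero)
  obtain Q where Q: "\<forall>z\<in>K. cmod (g z - poly Q z) \<le> e/2" using assms(2) e unfolding unif_def by (meson half_gt_zero)
  show "\<exists>R. \<forall>z\<in>K. cmod (f z + g z - poly R z) \<le> e"
  proof (intro exI ballI)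
    fix z assume z: "z \<in> K"
    have "cmod (f z + g z - poly (P + Q) z) = cmod ((f z - poly P z) + (g z - poly Q z))"
      by (simp add: algebra_simps)
    also have "\<dots> \<le> cmod (f z - poly P z) + cmod (g z - poly Q z)" by (rule norm_triangle_ineq)
    also have "\<dots> \<le> e" using P Q z by fastforce
    finally show "cmod (f z + g z - poly (P + Q) z) \<le> e" .
  qed
qed

lemma unif_cmult:
  assumes "unif K f" shows "unif K (\<lambda>z. c * f z)"
  unfolding unif_def
proof (intro allI impI)
  fix e :: real assume e: "e > 0"
  obtain P where P: "\<forall>z\<in>K. cmod (f z - poly P z) \<le> e/(cmod c + 1)"
    using assms e unfolding unif_def by (metis divide_pos_pos norm_ge_zero add_nonneg_pos zero_less_one)
  show "\<exists>R. \<forall>z\<in>K. cmod (c * f z - poly R z) \<le> e"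
  proof (intro exI ballI)
    fix z assume z: "z \<in> K"
    have "cmod (c * f z - poly (smult c P) z) = cmod c * cmod (f z - poly P z)"
      by (simp add: algebra_simps norm_mult[symmetric])
    also have "\<dots> \<le> (cmod c + 1) * (e/(cmod c + 1))"
      using P z by (intro mult_mono) auto
    also have "\<dots> = e" using norm_ge_zero[of c] by (metis add.commute add_nonneg_pos nonzero_mult_div_cancel_left times_divide_eq_right zero_less_one less_irrefl)
    finally show "cmod (c * f z - poly (smult c P) z) \<le> e" .
  qed
qed

lemma unif_bounded:
  assumes "unif K f" "bounded K" shows "\<exists>B. \<forall>z\<in>K. cmod (f z) \<le> B"
proof -
  obtain P where P: "\<forall>z\<in>K. cmod (f z - poly P z) \<le> 1" using assms(1) unfolding unif_def by force
  have "compact (closure K)" using assms(2) by (simp add: compact_closure)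
  then have "bounded (poly P ` closure K)"
    by (intro compact_imp_bounded compact_continuous_image continuous_intros)
  then obtain C where C: "\<forall>w\<in>poly P ` closure K. norm w \<le> C" by (meson bounded_iff)
  show ?thesis
  proof (intro exI ballI)
    fix z assume z: "z \<in> K"
    have "cmod (f z) \<le> cmod (f z - poly P z) + cmod (poly P z)" using norm_triangle_sub[of "f z" "poly P z"] by simp
    also have "\<dots> \<le> 1 + C" using P C z closure_subset by (intro add_mono) auto
    finally show "cmod (f z) \<le> 1 + C" .
  qed
qed

lemma unif_mult:
  assumes "unif K f" "unif K g" "bounded K" shows "unif K (\<lambda>z. f z * g z)"
  unfolding unif_def
proof (intro allI impI)
  fix e :: real assume e: "e > 0"
  obtain Bf where Bf: "\<forall>z\<in>K. cmod (f z) \<le> Bf" using unif_bounded assms by blast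
  obtain Bg where Bg: "\<forall>z\<in>K. cmod (g z) \<le> Bg" using unif_bounded assms by blast
  define B where "B = max 1 (max Bf Bg) + 1"
  have B1: "B \<ge> 1" unfolding B_def by simp
  define d where "d = min 1 (e / (2*B))"
  have d: "d > 0" "d \<le> 1" "d \<le> e/(2*B)" using e B1 unfolding d_def by auto
  obtain P where P: "\<forall>z\<in>K. cmod (f z - poly P z) \<le> d" using assms(1) d unfolding unif_def by blast
  obtain Q where Q: "\<forall>z\<in>K. cmod (g z - poly Q z) \<le> d" using assms(2) d unfolding unif_def by blast
  show "\<exists>R. \<forall>z\<in>K. cmod (f z * g z - poly R z) \<le> e"
  proof (intro exI ballI)
    fix z assume z: "z \<in> K"
    have fz: "cmod (f z) \<le> B" using Bf z unfolding B_def by force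
    have "cmod (poly Q z) \<le> cmod (g z) + cmod (g z - poly Q z)"
      using norm_triangle_sub[of "poly Q z" "g z"] by (simp add: norm_minus_commute)
    also have "\<dots> \<le> Bg + 1" using Bg Q d z by (intro add_mono) auto
    also have "\<dots> \<le> B" unfolding B_def by simp
    finally have qz: "cmod (poly Q z) \<le> B" .
    have "f z * g z - poly (P * Q) z = f z * (g z - poly Q z) + (f z - poly P z) * poly Q z"
      by (simp add: algebra_simps)
    then have "cmod (f z * g z - poly (P * Q) z) \<le> cmod (f z) * cmod (g z - poly Q z) + cmod (f z - poly P z) * cmod (poly Q z)"
      using norm_triangle_ineq[of "f z * (g z - poly Q z)" "(f z - poly P z) * poly Q z"] by (simp add: norm_mult)
    also have "\<dots> \<le> B * d + d * B"
      using fz qz P Q z B1 d by (intro add_mono mult_mono) auto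
    also have "\<dots> = 2 * B * d" by simp
    also have "\<dots> \<le> 2 * B * (e / (2*B))" using d B1 by (intro mult_left_mono) auto
    also have "\<dots> = e" using B1 by simp
    finally show "cmod (f z * g z - poly (P * Q) z) \<le> e" .
  qed
qed

lemma unif_sum:
  assumes "\<And>k. k \<in> A \<Longrightarrow> unif K (f k)" shows "unif K (\<lambda>z. \<Sum>k\<in>A. f k z)"
  using assms
proof (induction A rule: infinite_finite_induct)
  case (infinite A) then show ?case by (simp add: unif_const)
next
  case empty then show ?case by (simp add: unif_const)
next
  case (insert x F) then show ?case by (simp add: unif_add)
qed

lemma unif_power:
  assumes "unif K f" "bounded K" shows "unif K (\<lambda>z. f z ^ n)"
  by (induction n) (auto simp: unif_const intro!: unif_mult assms)

lemma unif_limit: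
  assumes "\<And>e. e > 0 \<Longrightarrow> \<exists>g. unif K g \<and> (\<forall>z\<in>K. cmod (f z - g z) \<le> e)"
  shows "unif K f"
  unfolding unif_def
proof (intro allI impI)
  fix e :: real assume e: "e > 0"
  obtain g where g: "unif K g" "\<forall>z\<in>K. cmod (f z - g z) \<le> e/2" using assms[of "e/2"] e by auto
  obtain P where P: "\<forall>z\<in>K. cmod (g z - poly P z) \<le> e/2" using g(1) e unfolding unif_def by (meson half_gt_zero)
  show "\<exists>P. \<forall>z\<in>K. cmod (f z - poly P z) \<le> e"
  proof (intro exI ballI)
    fix z assume z: "z \<in> K"
    have "cmod (f z - poly P z) \<le> cmod (f z - g z) + cmod (g z - poly P z)" by (rule norm_diff_triangle_ineq[of "f z" "g z" "g z" "poly P z", simplified]) 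
    also have "\<dots> \<le> e" using g P z by fastforce
    finally show "cmod (f z - poly P z) \<le> e" .
  qed
qed

lemma sums_norm_le:
  fixes f :: "nat \<Rightarrow> complex"
  assumes "f sums s" "g sums t" "\<And>n. norm (f n) \<le> g n"
  shows "norm s \<le> t"
  using norm_suminf_le[of f g] assms by (simp add: sums_iff)

lemma tail_bound:
  fixes a :: "nat \<Rightarrow> complex"
  assumes S: "(\<lambda>k. a k * w^k) sums F" and a: "\<And>k. cmod (a k) \<le> 1" and w: "cmod w \<le> 1/2"
  shows "cmod (F - (\<Sum>k<N. a k * w^k)) \<le> 2 * (1/2)^N"
proof -
  have 1: "(\<lambda>k. a (k+N) * w^(k+N)) sums (F - (\<Sum>k<N. a k * w^k))"
    using S by (subst sums_iff_shift) simp
  have "(\<lambda>k. (1/2::real)^N * (1/2)^k) sums ((1/2)^N * (1 / (1 - 1/2)))"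
    by (intro sums_mult geometric_sums) simp
  then have 2: "(\<lambda>k. (1/2::real)^(k+N)) sums (2 * (1/2)^N)"
    by (simp add: power_add mult.commute)
  have 3: "norm (a (k+N) * w^(k+N)) \<le> (1/2)^(k+N)" for k
  proof -
    have "norm (a (k+N) * w^(k+N)) = cmod (a (k+N)) * cmod w ^ (k+N)" by (simp add: norm_mult norm_power)
    also have "\<dots> \<le> 1 * (1/2)^(k+N)" using a w by (intro mult_mono power_mono) auto
    finally show ?thesis by simp
  qed
  show ?thesis using sums_norm_le[OF 1 2 3] .
qed

lemma unif_powser:
  fixes a :: "nat \<Rightarrow> complex"
  assumes x: "unif K x" and K: "bounded K" and xb: "\<And>z. z \<in> K \<Longrightarrow> cmod (x z) \<le> 1/2"
    and S: "\<And>w. cmod w \<le> 1/2 \<Longrightarrow> (\<lambda>k. a k * w^k) sums F w" and a: "\<And>k. cmod (a k) \<le> 1"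
  shows "unif K (\<lambda>z. F (x z))"
proof (rule unif_limit)
  fix e :: real assume e: "e > 0"
  obtain N where N: "(1/2::real)^N < e/2" using real_arch_pow_inv[of "e/2" "1/2"] e by auto
  show "\<exists>g. unif K g \<and> (\<forall>z\<in>K. cmod (F (x z) - g z) \<le> e)"
  proof (intro exI conjI ballI)
    show "unif K (\<lambda>z. \<Sum>k<N. a k * x z ^ k)"
      by (intro unif_sum unif_cmult unif_power x K)
    fix z assume z: "z \<in> K"
    have "cmod (F (x z) - (\<Sum>k<N. a k * x z ^ k)) \<le> 2 * (1/2)^N"
      by (rule tail_bound[OF S[OF xb[OF z]] a xb[OF z]])
    also have "\<dots> \<le> e" using N by simp
    finally show "cmod (F (x z) - (\<Sum>k<N. a k * x z ^ k)) \<le> e" .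
  qed
qed

lemma unif_geom:
  assumes x: "unif K x" and K: "bounded K" and xb: "\<And>z. z \<in> K \<Longrightarrow> cmod (x z) \<le> 1/2"
  shows "unif K (\<lambda>z. 1 / (1 - x z))"
proof (rule unif_powser[OF x K xb, of "\<lambda>_. 1"])
  fix w :: complex assume "cmod w \<le> 1/2"
  then show "(\<lambda>k. 1 * w^k) sums (1/(1-w))" using geometric_sums[of w] by simp
qed auto

lemma unif_ln1p:
  assumes x: "unif K x" and K: "bounded K" and xb: "\<And>z. z \<in> K \<Longrightarrow> cmod (x z) \<le> 1/2"
  shows "unif K (\<lambda>z. Ln (1 + x z))"
proof (rule unif_powser[OF x K xb, of "\<lambda>k. - ((-1)^k) / of_nat k"])
  fix w :: complex assume "cmod w \<le> 1/2"
  then have "(\<lambda>n. - ((-w)^n) / of_nat n) sums ln (1 + w)" by (intro Ln_series') auto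
  then show "(\<lambda>k. - ((-1)^k) / of_nat k * w^k) sums Ln (1 + w)"
    by (simp add: power_minus[of w] field_simps)
next
  fix k :: nat
  show "cmod (- ((-1)^k) / of_nat k) \<le> 1"
  proof (cases k)
    case (Suc m)
    have "cmod (1 + complex_of_nat m) = 1 + real m"
      by (metis norm_of_nat of_nat_Suc add.commute)
    then show ?thesis using Suc by (simp add: norm_divide norm_power)
  qed simp
qed

lemma Ln_same_half:
  fixes u v :: complex
  assumes u: "u \<noteq> 0" and v: "v \<noteq> 0" and im: "Im u = Im v"
    and re: "Im u = 0 \<Longrightarrow> Re u > 0 \<and> Re v > 0"
  shows "Ln u = Ln v + Ln (u / v)"
proof -
  have ex: "u / v = exp (Ln u - Ln v)" using u v by (simp add: exp_diff)
  have bu: "- pi < Im (Ln u)" "Im (Ln u) \<le> pi" using u v mpi_less_Im_Ln Im_Ln_le_pi by auto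
  have bv: "- pi < Im (Ln v)" "Im (Ln v) \<le> pi" using u v mpi_less_Im_Ln Im_Ln_le_pi by auto
  have "- pi < Im (Ln u - Ln v) \<and> Im (Ln u - Ln v) \<le> pi"
  proof (cases "Im u > 0")
    case True
    then show ?thesis using Im_Ln_pos_lt_imp[of u] Im_Ln_pos_lt_imp[of v] im by auto
  next
    case False
    show ?thesis
    proof (cases "Im u < 0")
      case True
      then have "\<not> (0 \<le> Im (Ln u) \<and> Im (Ln u) \<le> pi)" "\<not> (0 \<le> Im (Ln v) \<and> Im (Ln v) \<le> pi)"
        using Im_Ln_pos_le[OF u] Im_Ln_pos_le[OF v] im by auto
      then show ?thesis using bu bv by auto
    next
      case False
      then have "Im u = 0" using \<open>\<not> Im u > 0\<close> by auto
      then have "Im (Ln u) = 0" "Im (Ln v) = 0" using re im Im_Ln_eq_0[OF u] Im_Ln_eq_0[OF v] by auto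
      then show ?thesis by simp
    qed
  qed
  then have "Ln (u / v) = Ln u - Ln v" using ex Ln_exp by simp
  then show ?thesis by simp
qed

locale chain =
  fixes K :: "complex set" and w :: "complex \<Rightarrow> complex" and \<kappa> :: real
  assumes K: "bounded K" and w: "unif K w" and kpos: "\<kappa> > 0" and k1: "\<kappa> \<le> 1"
    and dist: "\<And>z s. z \<in> K \<Longrightarrow> s \<ge> 0 \<Longrightarrow> \<kappa> * s \<le> cmod (w z + of_real s)"
    and im0: "\<And>z. z \<in> K \<Longrightarrow> Im (w z) = 0 \<Longrightarrow> w z = 0"
begin

lemma nz: "z \<in> K \<Longrightarrow> s > 0 \<Longrightarrow> w z + of_real s \<noteq> 0"
  using dist[of z s] kpos by (smt (verit) mult_pos_pos norm_zero)

lemma step: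
  assumes s: "s > 0" "s \<le> s'" "2 * (s' - s) \<le> \<kappa> * s'"
    and R: "unif K (\<lambda>z. 1 / (w z + of_real s'))" and L: "unif K (\<lambda>z. Ln (w z + of_real s'))"
  shows "unif K (\<lambda>z. 1 / (w z + of_real s)) \<and> unif K (\<lambda>z. Ln (w z + of_real s))"
proof -
  define x where "x z = of_real (s' - s) * (1 / (w z + of_real s'))" for z
  have s'pos: "s' > 0" using s by auto
  have xu: "unif K x" unfolding x_def by (intro unif_cmult R)
  have xb: "cmod (x z) \<le> 1/2" if z: "z \<in> K" for z
  proof -
    have d: "\<kappa> * s' \<le> cmod (w z + of_real s')" using dist[OF z] s'pos by auto
    have pos: "\<kappa> * s' > 0" using kpos s'pos by simp
    have "cmod (x z) = (s' - s) / cmod (w z + of_real s')"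
      using s unfolding x_def by (simp add: norm_divide norm_mult flip: of_real_diff)
    also have "\<dots> \<le> (s' - s) / (\<kappa> * s')" using d pos s by (intro divide_left_mono) (auto intro!: mult_pos_pos)
    also have "\<dots> \<le> 1/2" using s pos by (simp add: divide_le_eq)
    finally show ?thesis .
  qed
  have mxu: "unif K (\<lambda>z. - x z)" using unif_cmult[OF xu, of "-1"] by simp
  have mxb: "cmod (- x z) \<le> 1/2" if "z \<in> K" for z using xb[OF that] by simp
  have eq: "w z + of_real s = (w z + of_real s') * (1 - x z)" if z: "z \<in> K" for z
    using nz[OF z s'pos] unfolding x_def by (simp add: field_simps)
  have "unif K (\<lambda>z. (1 / (w z + of_real s')) * (1 / (1 - x z)))"
    by (intro unif_mult R unif_geom xu xb K)
  then have A: "unif K (\<lambda>z. 1 / (w z + of_real s))"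
    by (rule unif_cong) (simp add: eq)
  have "unif K (\<lambda>z. Ln (w z + of_real s') + Ln (1 + - x z))"
    by (intro unif_add L unif_ln1p mxu mxb K)
  then have B: "unif K (\<lambda>z. Ln (w z + of_real s))"
  proof (rule unif_cong)
    fix z assume z: "z \<in> K"
    have "Ln (w z + of_real s) = Ln (w z + of_real s') + Ln ((w z + of_real s) / (w z + of_real s'))"
      using nz[OF z s(1)] nz[OF z s'pos] im0[OF z] s s'pos by (intro Ln_same_half) auto
    also have "(w z + of_real s) / (w z + of_real s') = 1 + - x z"
      using eq[OF z] nz[OF z s'pos] by (simp add: field_simps)
    finally show "Ln (w z + of_real s') + Ln (1 + - x z) = Ln (w z + of_real s)" by simp
  qed
  show ?thesis using A B by simp
qed

lemma base:
  assumes R: "R \<ge> 0" "\<And>z. z \<in> K \<Longrightarrow> cmod (w z) \<le> R" and s: "s \<ge> 2 * R + 1"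
  shows "unif K (\<lambda>z. 1 / (w z + of_real s)) \<and> unif K (\<lambda>z. Ln (w z + of_real s))"
proof -
  have spos: "s > 0" using R s by linarith
  define x where "x z = - (1 / of_real s) * w z" for z
  have xu: "unif K x" unfolding x_def by (intro unif_cmult w)
  have xb: "cmod (x z) \<le> 1/2" if z: "z \<in> K" for z
  proof -
    have "cmod (x z) = cmod (w z) / s" using spos unfolding x_def by (simp add: norm_divide norm_mult)
    also have "\<dots> \<le> R / s" using R(2)[OF z] spos by (simp add: divide_right_mono)
    also have "\<dots> \<le> 1/2" using s spos R by (simp add: divide_le_eq)
    finally show ?thesis .
  qed
  have mxu: "unif K (\<lambda>z. - x z)" using unif_cmult[OF xu, of "-1"] by simp
  have mxb: "cmod (- x z) \<le> 1/2" if "z \<in> K" for z using xb[OF that] by simp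
  have eq: "w z + of_real s = of_real s * (1 - x z)" for z
    using spos unfolding x_def by (simp add: field_simps)
  have nz1: "1 - x z \<noteq> 0" if "z \<in> K" for z
  proof
    assume "1 - x z = 0"
    then have "x z = 1" by simp
    then show False using xb[OF that] by simp
  qed
  have "unif K (\<lambda>z. (1 / of_real s) * (1 / (1 - x z)))"
    by (intro unif_cmult unif_geom xu xb K)
  then have A: "unif K (\<lambda>z. 1 / (w z + of_real s))"
    by (rule unif_cong) (simp add: eq)
  have "unif K (\<lambda>z. Ln (of_real s) + Ln (1 + - x z))"
    by (intro unif_add unif_const unif_ln1p mxu mxb K)
  then have B: "unif K (\<lambda>z. Ln (w z + of_real s))"
  proof (rule unif_cong)
    fix z assume z: "z \<in> K"
    have "Ln (w z + of_real s) = Ln (of_real s * (1 - x z))" by (simp add: eq)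
    also have "\<dots> = Ln (of_real s) + Ln (1 - x z)" using Ln_times_of_real[OF spos nz1[OF z]] by simp
    finally show "Ln (of_real s) + Ln (1 + - x z) = Ln (w z + of_real s)" by simp
  qed
  show ?thesis using A B by simp
qed

lemma all_pos:
  assumes s: "s > 0"
  shows "unif K (\<lambda>z. 1 / (w z + of_real s)) \<and> unif K (\<lambda>z. Ln (w z + of_real s))"
proof -
  obtain R0 where R0: "\<And>z. z \<in> K \<Longrightarrow> cmod (w z) \<le> R0" using unif_bounded[OF w K] by blast
  define R where "R = max R0 0"
  have R: "R \<ge> 0" "\<And>z. z \<in> K \<Longrightarrow> cmod (w z) \<le> R" using R0 unfolding R_def by force+
  define S0 where "S0 = 2 * R + 1"
  define \<theta> where "\<theta> = 1 - \<kappa>/2"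
  have th: "\<theta> > 0" "\<theta> < 1" using kpos k1 unfolding \<theta>_def by auto
  have S0: "S0 > 0" using R unfolding S0_def by simp
  have ind: "\<forall>s. S0 * \<theta>^n \<le> s \<longrightarrow> unif K (\<lambda>z. 1 / (w z + of_real s)) \<and> unif K (\<lambda>z. Ln (w z + of_real s))" for n
  proof (induction n)
    case 0
    then show ?case using base[OF R] unfolding S0_def by simp
  next
    case (Suc n)
    show ?case
    proof (intro allI impI)
      fix s assume s: "S0 * \<theta> ^ Suc n \<le> s"
      have "S0 * \<theta> ^ Suc n > 0" using S0 th by simp
      then have spos: "s > 0" using s by linarith
      define s' where "s' = s / \<theta>"
      have "S0 * \<theta>^n \<le> s'" using s th unfolding s'_def by (simp add: le_divide_eq mult.assoc mult.commute[of "\<theta>^n" \<theta>])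
      then have IH: "unif K (\<lambda>z. 1 / (w z + of_real s')) \<and> unif K (\<lambda>z. Ln (w z + of_real s'))"
        using Suc.IH by blast
      have ss': "s \<le> s'" using spos th unfolding s'_def by (simp add: le_divide_eq)
      have "2 * (s' - s) = \<kappa> * s'"
        using th unfolding s'_def \<theta>_def by (simp add: field_simps)
      then show "unif K (\<lambda>z. 1 / (w z + of_real s)) \<and> unif K (\<lambda>z. Ln (w z + of_real s))"
        using step[OF spos ss'] IH by simp
    qed
  qed
  obtain n where "\<theta>^n < s / S0" using real_arch_pow_inv[of "s/S0" \<theta>] s S0 th by auto
  then have "S0 * \<theta>^n \<le> s" using S0 by (simp add: field_simps)
  then show ?thesis using ind by blast
qed

end

lemma zeta_bound:
  fixes \<zeta> :: complex
  assumes h: "h > 0" and k: "\<kappa> > 0" and d1: "\<kappa> * h \<le> cmod (\<zeta> + of_real h)" and d2: "\<kappa> * h \<le> cmod (- \<zeta> + of_real h)"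
  shows "cmod (Ln (\<zeta> + of_real h) - Ln (- \<zeta> + of_real h)) \<le> 2/\<kappa> + 2*pi"
proof -
  define u where "u = \<zeta> + of_real h"
  define v where "v = - \<zeta> + of_real h"
  have kh: "\<kappa> * h > 0" using h k by simp
  have u0: "u \<noteq> 0" and v0: "v \<noteq> 0" using d1 d2 kh unfolding u_def v_def by auto
  have uv: "cmod u \<le> cmod v + 2 * h"
  proof -
    have "u = - v + 2 * of_real h" unfolding u_def v_def by simp
    then have "cmod u \<le> cmod (- v) + cmod (2 * of_real h :: complex)" by (metis norm_triangle_ineq)
    then show ?thesis using h by (simp add: norm_mult)
  qed
  have vu: "cmod v \<le> cmod u + 2 * h"
  proof -
    have "v = - u + 2 * of_real h" unfolding u_def v_def by simp
    then have "cmod v \<le> cmod (- u) + cmod (2 * of_real h :: complex)" by (metis norm_triangle_ineq)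
    then show ?thesis using h by (simp add: norm_mult)
  qed
  have lnb: "ln A - ln B \<le> 2/\<kappa>" if A: "A > 0" and B: "B \<ge> \<kappa> * h" and AB: "A \<le> B + 2 * h" for A B
  proof -
    have Bp: "B > 0" using B kh by linarith
    have "ln A - ln B = ln (A / B)" using A Bp by (simp add: ln_div)
    also have "\<dots> \<le> A / B - 1" using A Bp by (intro ln_le_minus_one) simp
    also have "\<dots> = (A - B) / B" using Bp by (simp add: field_simps)
    also have "\<dots> \<le> (2 * h) / B" using AB Bp by (intro divide_right_mono) auto
    also have "\<dots> \<le> (2 * h) / (\<kappa> * h)" using B kh h by (intro divide_left_mono) auto
    also have "\<dots> = 2 / \<kappa>" using h by simp
    finally show ?thesis .
  qed
  have re: "\<bar>Re (Ln u - Ln v)\<bar> \<le> 2/\<kappa>"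
    using lnb[of "cmod u" "cmod v"] lnb[of "cmod v" "cmod u"] u0 v0 uv vu d1 d2
    unfolding u_def v_def by (auto simp: abs_le_iff)
  have im: "\<bar>Im (Ln u - Ln v)\<bar> \<le> 2 * pi"
    using mpi_less_Im_Ln[of u] Im_Ln_le_pi[of u] mpi_less_Im_Ln[of v] Im_Ln_le_pi[of v] u0 v0 by auto
  have "cmod (Ln u - Ln v) \<le> \<bar>Re (Ln u - Ln v)\<bar> + \<bar>Im (Ln u - Ln v)\<bar>" by (rule cmod_le)
  also have "\<dots> \<le> 2/\<kappa> + 2*pi" using re im by simp
  finally show ?thesis unfolding u_def v_def .
qed

lemma zeta_limit:
  fixes \<zeta> :: complex
  assumes "Im \<zeta> = 0 \<Longrightarrow> \<zeta> = 0"
  shows "(\<lambda>n. Ln (\<zeta> + of_real (inverse (real (Suc n)))) - Ln (- \<zeta> + of_real (inverse (real (Suc n)))))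
           \<longlonglongrightarrow> \<i> * of_real pi * of_real (sgn (Im \<zeta>))"
proof (cases "Im \<zeta> = 0")
  case True
  then have "\<zeta> = 0" using assms by simp
  then show ?thesis by simp
next
  case False
  have h0: "(\<lambda>n. complex_of_real (inverse (real (Suc n)))) \<longlonglongrightarrow> 0"
    using tendsto_of_real[OF LIMSEQ_inverse_real_of_nat, where 'a=complex] by (simp only: of_real_0)
  have n1: "\<zeta> \<notin> \<real>\<^sub>\<le>\<^sub>0" "- \<zeta> \<notin> \<real>\<^sub>\<le>\<^sub>0" using False by (auto simp: complex_nonpos_Reals_iff)
  have "(\<lambda>n. Ln (\<zeta> + of_real (inverse (real (Suc n)))) - Ln (- \<zeta> + of_real (inverse (real (Suc n)))))
           \<longlonglongrightarrow> Ln (\<zeta> + 0) - Ln (- \<zeta> + 0)"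
    using n1 by (intro tendsto_intros h0) auto
  moreover have "Ln \<zeta> - Ln (- \<zeta>) = \<i> * of_real pi * of_real (sgn (Im \<zeta>))"
  proof -
    have z0: "\<zeta> \<noteq> 0" using False by auto
    show ?thesis using Ln_minus[OF z0] False by (cases "Im \<zeta> > 0") auto
  qed
  ultimately show ?thesis by simp
qed

lemma graph_param_diff: "graph_param y t - graph_param y c = Complex (t - c) (y t - y c)"
  by (simp add: graph_param_def complex_eq_iff)

lemma cont_graph_param:
  assumes "continuous_on S y" shows "continuous_on S (graph_param y)"
proof -
  have "graph_param y = (\<lambda>t. of_real t + \<i> * of_real (y t))"
    by (auto simp: graph_param_def Complex_eq)
  then show ?thesis using assms by (auto intro!: continuous_intros)
qed

locale graph =
  fixes y :: "real \<Rightarrow> real" and a b L :: real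
  assumes lip: "L-lipschitz_on {a..b} y"
begin

abbreviation "\<gamma> \<equiv> graph_param y"
abbreviation "K \<equiv> \<gamma> ` {a..b}"

lemma L0: "L \<ge> 0" using lip by (rule lipschitz_on_nonneg)

lemma cont_y: "continuous_on {a..b} y" using lip by (rule lipschitz_on_continuous_on)

lemma cont_gamma: "continuous_on {a..b} \<gamma>" by (rule cont_graph_param[OF cont_y])

lemma K_bounded: "bounded K"
  by (intro compact_imp_bounded compact_continuous_image cont_gamma) simp

definition wf :: "real \<Rightarrow> real \<Rightarrow> complex \<Rightarrow> complex" where
  "wf \<sigma> c z = \<i> * of_real \<sigma> * (z - \<gamma> c)"

lemma wf_Re_Im:
  "Re (wf \<sigma> c (\<gamma> t) + of_real s) = s - \<sigma> * (y t - y c)"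
  "Im (wf \<sigma> c (\<gamma> t) + of_real s) = \<sigma> * (t - c)"
  by (simp_all add: wf_def graph_param_diff)

lemma geo_dist:
  assumes t: "t \<in> {a..b}" and c: "c \<in> {a..b}" and s: "s \<ge> 0" and \<sigma>: "\<bar>\<sigma>\<bar> = 1"
  shows "(1/(1+L)) * s \<le> cmod (wf \<sigma> c (\<gamma> t) + of_real s)"
proof -
  have Ly: "\<bar>y t - y c\<bar> \<le> L * \<bar>t - c\<bar>" using lipschitz_onD[OF lip t c] by (simp add: dist_real_def)
  have im: "\<bar>t - c\<bar> \<le> cmod (wf \<sigma> c (\<gamma> t) + of_real s)"
  proof -
    have "\<bar>Im (wf \<sigma> c (\<gamma> t) + of_real s)\<bar> \<le> cmod (wf \<sigma> c (\<gamma> t) + of_real s)" by (rule abs_Im_le_cmod)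
    moreover have "\<bar>Im (wf \<sigma> c (\<gamma> t) + of_real s)\<bar> = \<bar>t - c\<bar>" by (simp only: wf_Re_Im(2)) (simp add: abs_mult \<sigma>)
    ultimately show ?thesis by simp
  qed
  have re: "s - L * \<bar>t - c\<bar> \<le> cmod (wf \<sigma> c (\<gamma> t) + of_real s)"
  proof -
    have "\<bar>\<sigma> * (y t - y c)\<bar> \<le> L * \<bar>t - c\<bar>" using Ly \<sigma> by (simp add: abs_mult)
    then have "s - L * \<bar>t - c\<bar> \<le> \<bar>s - \<sigma> * (y t - y c)\<bar>" by linarith
    also have "\<dots> = \<bar>Re (wf \<sigma> c (\<gamma> t) + of_real s)\<bar>" by (simp only: wf_Re_Im(1))
    also have "\<dots> \<le> cmod (wf \<sigma> c (\<gamma> t) + of_real s)" by (rule abs_Re_le_cmod)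
    finally show ?thesis .
  qed
  have L1: "1 + L > 0" using L0 by simp
  show ?thesis
  proof (cases "\<bar>t - c\<bar> \<ge> s / (1+L)")
    case True then show ?thesis using im by simp
  next
    case False
    then have "L * \<bar>t - c\<bar> \<le> L * (s / (1+L))" using L0 by (intro mult_left_mono) auto
    moreover have "s - L * (s / (1+L)) = s / (1+L)" using L1 by (simp add: field_simps)
    ultimately show ?thesis using re by simp
  qed
qed

lemma wf_chain:
  assumes c: "c \<in> {a..b}" and \<sigma>: "\<bar>\<sigma>\<bar> = 1"
  shows "chain K (wf \<sigma> c) (1/(1+L))"
proof
  show "bounded K" by (rule K_bounded)
  have "unif K (\<lambda>z. (\<i> * of_real \<sigma>) * z + (- (\<i> * of_real \<sigma> * \<gamma> c)))"
    by (intro unif_add unif_cmult unif_id unif_const)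
  then show "unif K (wf \<sigma> c)" by (rule unif_cong) (simp add: wf_def algebra_simps)
  show "0 < 1 / (1 + L)" using L0 by simp
  show "1 / (1 + L) \<le> 1" using L0 by simp
  fix z and s :: real assume "z \<in> K" "0 \<le> s"
  then show "1 / (1 + L) * s \<le> cmod (wf \<sigma> c z + complex_of_real s)" using geo_dist c \<sigma> by auto
next
  fix z assume z: "z \<in> K" and im: "Im (wf \<sigma> c z) = 0"
  then obtain t where t: "t \<in> {a..b}" "z = \<gamma> t" by auto
  have "\<sigma> * (t - c) = 0" using wf_Re_Im(2)[of \<sigma> c t 0] im t by simp
  then have "t = c" using \<sigma> by auto
  then show "wf \<sigma> c z = 0" using t by (simp add: wf_def)
qed

definition Phi :: "real \<Rightarrow> real \<Rightarrow> complex \<Rightarrow> complex" where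
  "Phi c h z = Ln (wf 1 c z + of_real h) - Ln (wf (-1) c z + of_real h)"

lemma Phi_unif:
  assumes c: "c \<in> {a..b}" and h: "h > 0"
  shows "unif K (Phi c h)"
proof -
  interpret p: chain K "wf 1 c" "1/(1+L)" by (rule wf_chain[OF c]) simp
  interpret m: chain K "wf (-1) c" "1/(1+L)" by (rule wf_chain[OF c]) simp
  show ?thesis unfolding Phi_def
    using unif_add[OF conjunct2[OF p.all_pos[OF h]] unif_cmult[OF conjunct2[OF m.all_pos[OF h]], of "-1"]]
    by simp
qed

lemma wf_neg: "wf (-1) c z = - wf 1 c z" by (simp add: wf_def)

lemma Phi_bound:
  assumes c: "c \<in> {a..b}" and t: "t \<in> {a..b}" and h: "h > 0"
  shows "cmod (Phi c h (\<gamma> t)) \<le> 2 * (1 + L) + 2 * pi"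
proof -
  have k: "1/(1+L) > 0" using L0 by simp
  have "cmod (Phi c h (\<gamma> t)) \<le> 2 / (1/(1+L)) + 2 * pi"
    unfolding Phi_def wf_neg
    using geo_dist[OF t c, of h 1] geo_dist[OF t c, of h "-1"] h
    by (intro zeta_bound[OF h k]) (auto simp: wf_neg)
  then show ?thesis by simp
qed

lemma Phi_limit:
  assumes c: "c \<in> {a..b}" and t: "t \<in> {a..b}"
  shows "(\<lambda>n. Phi c (inverse (real (Suc n))) (\<gamma> t)) \<longlonglongrightarrow> \<i> * of_real pi * of_real (sgn (t - c))"
proof -
  have im: "Im (wf 1 c (\<gamma> t)) = t - c" using wf_Re_Im(2)[of 1 c t 0] by simp
  have "Im (wf 1 c (\<gamma> t)) = 0 \<Longrightarrow> wf 1 c (\<gamma> t) = 0" using im by (simp add: wf_def)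
  from zeta_limit[OF this] show ?thesis unfolding Phi_def wf_neg im .
qed

lemma Phi_cont:
  assumes c: "c \<in> {a..b}" and h: "h > 0"
  shows "continuous_on {a..b} (\<lambda>t. Phi c h (\<gamma> t))"
proof -
  have nn: "wf \<sigma> c (\<gamma> t) + of_real h \<notin> \<real>\<^sub>\<le>\<^sub>0" if "\<bar>\<sigma>\<bar> = 1" for \<sigma> t
  proof
    assume "wf \<sigma> c (\<gamma> t) + of_real h \<in> \<real>\<^sub>\<le>\<^sub>0"
    then have "\<sigma> * (t - c) = 0" "h - \<sigma> * (y t - y c) \<le> 0"
      using wf_Re_Im[of \<sigma> c t h] by (auto simp: complex_nonpos_Reals_iff)
    then show False using that h by auto
  qed
  have cw: "continuous_on {a..b} (\<lambda>t. wf \<sigma> c (\<gamma> t) + of_real h)" for \<sigma>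
    unfolding wf_def by (intro continuous_intros cont_gamma)
  have cl: "continuous_on {a..b} (\<lambda>t. Ln (wf \<sigma> c (\<gamma> t) + of_real h))" if "\<bar>\<sigma>\<bar> = 1" for \<sigma>
    by (rule continuous_on_compose2[OF continuous_on_Ln[of "- \<real>\<^sub>\<le>\<^sub>0"] cw[of \<sigma>]]) (use nn[OF that] in auto)
  show ?thesis unfolding Phi_def
    by (intro continuous_on_diff cl) auto
qed

end

definition sqd :: "real measure \<Rightarrow> (real \<Rightarrow> complex) \<Rightarrow> (real \<Rightarrow> complex) \<Rightarrow> ennreal" where
  "sqd \<mu> g h = (\<integral>\<^sup>+t. ennreal ((cmod (g t - h t))\<^sup>2) \<partial>\<mu>)"

lemma sq_tri: "ennreal ((cmod (u + v))\<^sup>2) \<le> 2 * ennreal ((cmod u)\<^sup>2) + 2 * ennreal ((cmod v)\<^sup>2)"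
proof -
  have "(cmod (u + v))\<^sup>2 \<le> (cmod u + cmod v)\<^sup>2"
    by (intro power_mono norm_triangle_ineq) simp
  also have "\<dots> \<le> 2 * (cmod u)\<^sup>2 + 2 * (cmod v)\<^sup>2"
  proof -
    have "0 \<le> (cmod u - cmod v)\<^sup>2" by simp
    then show ?thesis by (simp add: power2_sum power2_diff)
  qed
  finally have "ennreal ((cmod (u + v))\<^sup>2) \<le> ennreal (2 * (cmod u)\<^sup>2 + 2 * (cmod v)\<^sup>2)"
    by (rule ennreal_leI)
  also have "\<dots> = 2 * ennreal ((cmod u)\<^sup>2) + 2 * ennreal ((cmod v)\<^sup>2)"
    by (simp add: ennreal_plus ennreal_mult)
  finally show ?thesis .
qed

lemma sqd_tri:
  assumes [measurable]: "f \<in> borel_measurable \<mu>" "g \<in> borel_measurable \<mu>" "h \<in> borel_measurable \<mu>"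
  shows "sqd \<mu> f h \<le> 2 * sqd \<mu> f g + 2 * sqd \<mu> g h"
proof -
  have "sqd \<mu> f h \<le> (\<integral>\<^sup>+t. 2 * ennreal ((cmod (f t - g t))\<^sup>2) + 2 * ennreal ((cmod (g t - h t))\<^sup>2) \<partial>\<mu>)"
    unfolding sqd_def
  proof (intro nn_integral_mono)
    fix t
    show "ennreal ((cmod (f t - h t))\<^sup>2) \<le> 2 * ennreal ((cmod (f t - g t))\<^sup>2) + 2 * ennreal ((cmod (g t - h t))\<^sup>2)"
      using sq_tri[of "f t - g t" "g t - h t"] by simp
  qed
  also have "\<dots> = 2 * sqd \<mu> f g + 2 * sqd \<mu> g h"
    unfolding sqd_def by (simp add: nn_integral_add nn_integral_cmult)
  finally show ?thesis .
qed

locale meas = graph +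
  fixes \<mu> :: "real measure"
  assumes fin: "finite_measure \<mu>" and sp: "space \<mu> = {a..b}"
    and st: "sets \<mu> = sets (restrict_space borel {a..b})"
begin

definition apx :: "(real \<Rightarrow> complex) \<Rightarrow> bool" where
  "apx g \<longleftrightarrow> g \<in> borel_measurable \<mu> \<and> (\<forall>e>0. \<exists>P. sqd \<mu> g (\<lambda>t. poly P (\<gamma> t)) < ennreal e)"

lemma meas_cont: "continuous_on {a..b} f \<Longrightarrow> f \<in> borel_measurable \<mu>"
  using borel_measurable_continuous_on_restrict measurable_cong_sets[OF st refl] by blast

lemma meas_borel: "f \<in> borel_measurable borel \<Longrightarrow> f \<in> borel_measurable \<mu>"
  using measurable_restrict_space1 measurable_cong_sets[OF st refl] by blast

lemma meas_poly[measurable]: "(\<lambda>t. poly P (\<gamma> t)) \<in> borel_measurable \<mu>"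
  by (intro meas_cont continuous_on_compose2[OF _ cont_gamma, of UNIV]) (auto intro: continuous_intros)

lemma sqd_cong: "(\<And>t. t \<in> {a..b} \<Longrightarrow> f t = f' t) \<Longrightarrow> (\<And>t. t \<in> {a..b} \<Longrightarrow> g t = g' t) \<Longrightarrow> sqd \<mu> f g = sqd \<mu> f' g'"
  unfolding sqd_def by (intro nn_integral_cong) (simp add: sp)

lemma apx_cong:
  assumes "apx f" "\<And>t. t \<in> {a..b} \<Longrightarrow> f t = g t" shows "apx g"
proof -
  have "f \<in> borel_measurable \<mu>" using assms unfolding apx_def by simp
  then have "g \<in> borel_measurable \<mu>" using measurable_cong[of \<mu> f g borel] assms(2) sp by simp
  moreover have "sqd \<mu> g (\<lambda>t. poly P (\<gamma> t)) = sqd \<mu> f (\<lambda>t. poly P (\<gamma> t))" for P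
    using assms(2) by (intro sqd_cong) auto
  ultimately show ?thesis using assms(1) unfolding apx_def by simp
qed

lemma apx_poly: "apx (\<lambda>t. poly P (\<gamma> t))"
  unfolding apx_def sqd_def by (auto intro!: exI[of _ P])

lemma apx_const: "apx (\<lambda>t. c)"
  using apx_poly[of "[:c:]"] by simp

lemma apx_limit:
  assumes g[measurable]: "g \<in> borel_measurable \<mu>"
    and H: "\<And>e. e > 0 \<Longrightarrow> \<exists>h. apx h \<and> sqd \<mu> g h < ennreal e"
  shows "apx g"
  unfolding apx_def
proof (intro conjI allI impI g)
  fix e :: real assume e: "e > 0"
  have e4: "e/8 > 0" using e by simp
  obtain h where h: "apx h" "sqd \<mu> g h < ennreal (e/8)" using H[of "e/8"] e by auto
  have hm[measurable]: "h \<in> borel_measurable \<mu>" using h unfolding apx_def by simp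
  obtain P where P: "sqd \<mu> h (\<lambda>t. poly P (\<gamma> t)) < ennreal (e/8)" using h(1) e4 unfolding apx_def by blast
  have two: "2 * ennreal (e/8) = ennreal (e/4)" using e
    by (simp add: mult_2 ennreal_plus[symmetric])
  have "sqd \<mu> g (\<lambda>t. poly P (\<gamma> t)) \<le> 2 * sqd \<mu> g h + 2 * sqd \<mu> h (\<lambda>t. poly P (\<gamma> t))"
    by (rule sqd_tri) auto
  also have "\<dots> \<le> 2 * ennreal (e/8) + 2 * ennreal (e/8)"
    using h P by (intro add_mono mult_left_mono) auto
  also have "\<dots> = ennreal (e/2)" using e by (simp add: two ennreal_plus[symmetric])
  also have "\<dots> < ennreal e" using e by (simp add: ennreal_less_iff)
  finally show "\<exists>P. sqd \<mu> g (\<lambda>t. poly P (\<gamma> t)) < ennreal e" by blast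
qed

end

context meas
begin

lemma apx_meas: "apx f \<Longrightarrow> f \<in> borel_measurable \<mu>" unfolding apx_def by simp

lemma apx_add:
  assumes f: "apx f" and g: "apx g" shows "apx (\<lambda>t. f t + g t)"
  unfolding apx_def
proof (intro conjI allI impI)
  have [measurable]: "f \<in> borel_measurable \<mu>" "g \<in> borel_measurable \<mu>" using f g by (auto dest: apx_meas)
  show "(\<lambda>t. f t + g t) \<in> borel_measurable \<mu>" by measurable
  fix e :: real assume e: "e > 0"
  have e8: "e/8 > 0" using e by simp
  obtain P where P: "sqd \<mu> f (\<lambda>t. poly P (\<gamma> t)) < ennreal (e/8)" using f e8 unfolding apx_def by blast
  obtain Q where Q: "sqd \<mu> g (\<lambda>t. poly Q (\<gamma> t)) < ennreal (e/8)" using g e8 unfolding apx_def by blast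
  have two: "2 * ennreal (e/8) = ennreal (e/4)" using e
    by (simp add: mult_2 ennreal_plus[symmetric])
  have "sqd \<mu> (\<lambda>t. f t + g t) (\<lambda>t. poly (P + Q) (\<gamma> t))
        \<le> (\<integral>\<^sup>+t. 2 * ennreal ((cmod (f t - poly P (\<gamma> t)))\<^sup>2) + 2 * ennreal ((cmod (g t - poly Q (\<gamma> t)))\<^sup>2) \<partial>\<mu>)"
    unfolding sqd_def
  proof (intro nn_integral_mono)
    fix t
    have "f t + g t - poly (P + Q) (\<gamma> t) = (f t - poly P (\<gamma> t)) + (g t - poly Q (\<gamma> t))" by (simp add: algebra_simps)
    then show "ennreal ((cmod (f t + g t - poly (P + Q) (\<gamma> t)))\<^sup>2) \<le> 2 * ennreal ((cmod (f t - poly P (\<gamma> t)))\<^sup>2) + 2 * ennreal ((cmod (g t - poly Q (\<gamma> t)))\<^sup>2)"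
      using sq_tri[of "f t - poly P (\<gamma> t)" "g t - poly Q (\<gamma> t)"] by (simp only:)
  qed
  also have "\<dots> = 2 * sqd \<mu> f (\<lambda>t. poly P (\<gamma> t)) + 2 * sqd \<mu> g (\<lambda>t. poly Q (\<gamma> t))"
    unfolding sqd_def by (simp add: nn_integral_add nn_integral_cmult)
  also have "\<dots> \<le> 2 * ennreal (e/8) + 2 * ennreal (e/8)"
    using P Q by (intro add_mono mult_left_mono) auto
  also have "\<dots> = ennreal (e/2)" using e by (simp add: two ennreal_plus[symmetric])
  also have "\<dots> < ennreal e" using e by (simp add: ennreal_less_iff)
  finally show "\<exists>R. sqd \<mu> (\<lambda>t. f t + g t) (\<lambda>t. poly R (\<gamma> t)) < ennreal e" by blast
qed

lemma apx_cmult: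
  assumes f: "apx f" shows "apx (\<lambda>t. c * f t)"
  unfolding apx_def
proof (intro conjI allI impI)
  have [measurable]: "f \<in> borel_measurable \<mu>" using f by (auto dest: apx_meas)
  show "(\<lambda>t. c * f t) \<in> borel_measurable \<mu>" by measurable
  fix e :: real assume e: "e > 0"
  define C where "C = (cmod c)\<^sup>2"
  have C: "C \<ge> 0" unfolding C_def by simp
  have e': "e / (C + 1) > 0" using e C by simp
  obtain P where P: "sqd \<mu> f (\<lambda>t. poly P (\<gamma> t)) < ennreal (e / (C + 1))" using f e' unfolding apx_def by blast
  have "sqd \<mu> (\<lambda>t. c * f t) (\<lambda>t. poly (smult c P) (\<gamma> t)) = (\<integral>\<^sup>+t. ennreal C * ennreal ((cmod (f t - poly P (\<gamma> t)))\<^sup>2) \<partial>\<mu>)"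
    unfolding sqd_def C_def
  proof (intro nn_integral_cong)
    fix t
    have "c * f t - poly (smult c P) (\<gamma> t) = c * (f t - poly P (\<gamma> t))" by (simp add: algebra_simps)
    then have "(cmod (c * f t - poly (smult c P) (\<gamma> t)))\<^sup>2 = (cmod c)\<^sup>2 * (cmod (f t - poly P (\<gamma> t)))\<^sup>2"
      by (simp add: norm_mult power_mult_distrib)
    then show "ennreal ((cmod (c * f t - poly (smult c P) (\<gamma> t)))\<^sup>2) = ennreal ((cmod c)\<^sup>2) * ennreal ((cmod (f t - poly P (\<gamma> t)))\<^sup>2)"
      by (simp add: ennreal_mult)
  qed
  also have "\<dots> = ennreal C * sqd \<mu> f (\<lambda>t. poly P (\<gamma> t))" unfolding sqd_def by (simp add: nn_integral_cmult)
  also have "\<dots> \<le> ennreal C * ennreal (e / (C + 1))" using P by (intro mult_left_mono) auto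
  also have "\<dots> = ennreal (C * (e / (C + 1)))" using C e' by (simp only: ennreal_mult[symmetric])
  also have "\<dots> < ennreal e"
  proof -
    have "C * (e / (C + 1)) < e" using C e by (simp add: field_simps)
    then show ?thesis using e by (intro ennreal_lessI) auto
  qed
  finally show "\<exists>R. sqd \<mu> (\<lambda>t. c * f t) (\<lambda>t. poly R (\<gamma> t)) < ennreal e" by blast
qed

lemma apx_sum:
  assumes "\<And>k. k \<in> A \<Longrightarrow> apx (f k)" shows "apx (\<lambda>t. \<Sum>k\<in>A. f k t)"
  using assms
proof (induction A rule: infinite_finite_induct)
  case (infinite A) then show ?case by (simp add: apx_const)
next
  case empty then show ?case by (simp add: apx_const)
next
  case (insert x F) then show ?case by (simp add: apx_add)
qed

lemma sqd_dom:
  assumes G[measurable]: "\<And>n. G n \<in> borel_measurable \<mu>" and g[measurable]: "g \<in> borel_measurable \<mu>"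
    and w[measurable]: "w \<in> borel_measurable \<mu>" and wi: "(\<integral>\<^sup>+t. ennreal (w t) \<partial>\<mu>) < \<infinity>"
    and lim: "\<And>t. t \<in> {a..b} \<Longrightarrow> (\<lambda>n. G n t) \<longlonglongrightarrow> g t"
    and bd: "\<And>n t. t \<in> {a..b} \<Longrightarrow> (cmod (g t - G n t))\<^sup>2 \<le> w t"
  shows "(\<lambda>n. sqd \<mu> g (G n)) \<longlonglongrightarrow> 0"
proof -
  have "(\<lambda>n. (\<integral>\<^sup>+t. ennreal (norm ((\<lambda>t. 0::real) t - (cmod (g t - G n t))\<^sup>2)) \<partial>\<mu>)) \<longlonglongrightarrow> 0"
  proof (rule nn_integral_dominated_convergence_norm[where w=w])
    show "\<And>j. AE x in \<mu>. norm ((cmod (g x - G j x))\<^sup>2) \<le> w x"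
      using bd by (intro AE_I2) (simp add: sp)
    show "(\<integral>\<^sup>+ x. ennreal (w x) \<partial>\<mu>) < \<infinity>" by (rule wi)
    show "AE x in \<mu>. (\<lambda>i. (cmod (g x - G i x))\<^sup>2) \<longlonglongrightarrow> 0"
    proof (intro AE_I2)
      fix x assume "x \<in> space \<mu>"
      then have "(\<lambda>i. G i x) \<longlonglongrightarrow> g x" using lim sp by simp
      then have "(\<lambda>i. (cmod (g x - G i x))\<^sup>2) \<longlonglongrightarrow> (cmod (g x - g x))\<^sup>2"
        by (intro tendsto_intros)
      then show "(\<lambda>i. (cmod (g x - G i x))\<^sup>2) \<longlonglongrightarrow> 0" by simp
    qed
  qed measurable
  then show ?thesis unfolding sqd_def by simp
qed

lemma apx_seq:
  assumes G: "\<And>n. apx (G n)" and g: "g \<in> borel_measurable \<mu>" and lim: "(\<lambda>n. sqd \<mu> g (G n)) \<longlonglongrightarrow> 0"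
  shows "apx g"
proof (rule apx_limit[OF g])
  fix e :: real assume e: "e > 0"
  then have "eventually (\<lambda>n. sqd \<mu> g (G n) < ennreal e) sequentially"
    using order_tendstoD(2)[OF lim, of "ennreal e"] by simp
  then obtain n where "sqd \<mu> g (G n) < ennreal e" by (auto simp: eventually_sequentially)
  then show "\<exists>h. apx h \<and> sqd \<mu> g h < ennreal e" using G by blast
qed

lemma finite_int_const: "(\<integral>\<^sup>+t. ennreal c \<partial>\<mu>) < \<infinity>"
proof -
  interpret finite_measure \<mu> by (rule fin)
  show ?thesis by (simp add: nn_integral_const ennreal_mult_eq_top_iff less_top[symmetric])
qed

lemma apx_bounded_lim:
  assumes G: "\<And>n. apx (G n)" and g: "g \<in> borel_measurable \<mu>"
    and lim: "\<And>t. t \<in> {a..b} \<Longrightarrow> (\<lambda>n. G n t) \<longlonglongrightarrow> g t"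
    and bd: "\<And>n t. t \<in> {a..b} \<Longrightarrow> cmod (G n t) \<le> B"
  shows "apx g"
proof (rule apx_seq[OF G g])
  have gb: "cmod (g t) \<le> B" if "t \<in> {a..b}" for t
    using lim[OF that] bd[OF that] by (intro LIMSEQ_le_const2[where X="\<lambda>n. cmod (G n t)"] tendsto_intros) auto
  show "(\<lambda>n. sqd \<mu> g (G n)) \<longlonglongrightarrow> 0"
  proof (rule sqd_dom[where w="\<lambda>t. (2*B)\<^sup>2"])
    show "(\<integral>\<^sup>+t. ennreal ((2*B)\<^sup>2) \<partial>\<mu>) < \<infinity>" by (rule finite_int_const)
    fix n t assume t: "t \<in> {a..b}"
    have "cmod (g t - G n t) \<le> cmod (g t) + cmod (G n t)" by (rule norm_triangle_ineq4)
    also have "\<dots> \<le> 2 * B" using gb[OF t] bd[OF t, of n] by simp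
    finally show "(cmod (g t - G n t))\<^sup>2 \<le> (2*B)\<^sup>2" by (intro power_mono) auto
  qed (use G apx_meas g lim in auto)
qed

lemma apx_unif:
  assumes f: "f \<in> borel_measurable \<mu>"
    and U: "\<And>e. e > 0 \<Longrightarrow> \<exists>P. \<forall>t\<in>{a..b}. cmod (f t - poly P (\<gamma> t)) \<le> e"
  shows "apx f"
  unfolding apx_def
proof (intro conjI allI impI f)
  interpret finite_measure \<mu> by (rule fin)
  fix e :: real assume e: "e > 0"
  define m where "m = measure \<mu> (space \<mu>)"
  have m: "m \<ge> 0" unfolding m_def by simp
  define d where "d = min 1 (e / (m + 1))"
  have d: "d > 0" "d \<le> 1" "d \<le> e / (m + 1)" using e m unfolding d_def by auto
  obtain P where P: "\<forall>t\<in>{a..b}. cmod (f t - poly P (\<gamma> t)) \<le> d" using U d by blast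
  have "sqd \<mu> f (\<lambda>t. poly P (\<gamma> t)) \<le> (\<integral>\<^sup>+t. ennreal (d\<^sup>2) \<partial>\<mu>)"
    unfolding sqd_def using P d
    by (intro nn_integral_mono) (auto simp: sp intro!: ennreal_leI power_mono)
  also have "\<dots> = ennreal (d\<^sup>2 * m)"
    by (simp add: nn_integral_const emeasure_eq_measure m_def ennreal_mult)
  also have "\<dots> < ennreal e"
  proof -
    have "d\<^sup>2 * m \<le> d * m" using d m by (intro mult_right_mono) (auto simp: power2_eq_square mult_le_cancel_left1)
    also have "\<dots> \<le> e / (m + 1) * m" using d m by (intro mult_right_mono) auto
    also have "\<dots> < e" using e m by (simp add: field_simps)
    finally show ?thesis using e by (intro ennreal_lessI) auto
  qed
  finally show "\<exists>P. sqd \<mu> f (\<lambda>t. poly P (\<gamma> t)) < ennreal e" by blast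
qed

end

context meas
begin

lemma unif_to_t:
  assumes "unif K F" shows "\<And>e. e > 0 \<Longrightarrow> \<exists>P. \<forall>t\<in>{a..b}. cmod (F (\<gamma> t) - poly P (\<gamma> t)) \<le> e"
  using assms unfolding unif_def by blast

lemma apx_sgn:
  assumes c: "c \<in> {a..b}"
  shows "apx (\<lambda>t. \<i> * of_real pi * of_real (sgn (t - c)))"
proof (rule apx_bounded_lim[where G="\<lambda>n t. Phi c (inverse (real (Suc n))) (\<gamma> t)" and B="2 * (1 + L) + 2 * pi"])
  fix n
  have h: "inverse (real (Suc n)) > 0" by simp
  show "apx (\<lambda>t. Phi c (inverse (real (Suc n))) (\<gamma> t))"
    by (intro apx_unif meas_cont Phi_cont[OF c h] unif_to_t[OF Phi_unif[OF c h]])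
  fix t assume t: "t \<in> {a..b}"
  show "cmod (Phi c (inverse (real (Suc n))) (\<gamma> t)) \<le> 2 * (1 + L) + 2 * pi"
    by (rule Phi_bound[OF c t h])
next
  fix t assume t: "t \<in> {a..b}"
  show "(\<lambda>n. Phi c (inverse (real (Suc n))) (\<gamma> t)) \<longlonglongrightarrow> \<i> * of_real pi * of_real (sgn (t - c))"
    by (rule Phi_limit[OF c t])
next
  show "(\<lambda>t. \<i> * of_real pi * of_real (sgn (t - c))) \<in> borel_measurable \<mu>"
    by (intro meas_borel) measurable
qed

definition stp :: "real \<Rightarrow> real \<Rightarrow> complex" where
  "stp c t = of_real ((1 + sgn (t - c)) / 2)"

lemma apx_stp: "apx (stp c)"
proof (cases "c < a")
  case True
  show ?thesis by (rule apx_cong[OF apx_const[of 1]]) (use True in \<open>auto simp: stp_def\<close>)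
next
  case ca: False
  show ?thesis
  proof (cases "c > b")
    case True
    show ?thesis by (rule apx_cong[OF apx_const[of 0]]) (use True in \<open>auto simp: stp_def\<close>)
  next
    case False
    then have c: "c \<in> {a..b}" using ca by auto
    have "apx (\<lambda>t. 1/2 + (1 / (2 * \<i> * of_real pi)) * (\<i> * of_real pi * of_real (sgn (t - c))))"
      by (intro apx_add apx_const apx_cmult apx_sgn[OF c])
    then show ?thesis by (rule apx_cong) (simp add: stp_def field_simps)
  qed
qed

lemma apx_ind_gt: "apx (\<lambda>t. indicator {c<..} t)"
proof (rule apx_bounded_lim[where G="\<lambda>n. stp (c + inverse (real (Suc n)))" and B=1])
  show "\<And>n. apx (stp (c + inverse (real (Suc n))))" by (rule apx_stp)
  show "(\<lambda>t. indicator {c<..} t) \<in> borel_measurable \<mu>" by (intro meas_borel) measurable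
next
  fix n t
  show "cmod (stp (c + inverse (real (Suc n))) t) \<le> 1"
    by (auto simp: stp_def sgn_if)
next
  fix t assume t: "t \<in> {a..b}"
  show "(\<lambda>n. stp (c + inverse (real (Suc n))) t) \<longlonglongrightarrow> indicator {c<..} t"
  proof (cases "t > c")
    case True
    have "eventually (\<lambda>n. inverse (real (Suc n)) < t - c) sequentially"
      using order_tendstoD(2)[OF LIMSEQ_inverse_real_of_nat, of "t - c"] True by simp
    then have "eventually (\<lambda>n. stp (c + inverse (real (Suc n))) t = indicator {c<..} t) sequentially"
      by eventually_elim (use True in \<open>auto simp: stp_def\<close>)
    then show ?thesis by (rule tendsto_eventually)
  next
    case False
    have "stp (c + inverse (real (Suc n))) t = 0" for n
    proof -
      have "t - (c + inverse (real (Suc n))) < 0" using False by (smt (verit) inverse_positive_iff_positive of_nat_0_less_iff zero_less_Suc)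
      then show ?thesis by (simp add: stp_def)
    qed
    then show ?thesis using False by simp
  qed
qed

end

context meas
begin

lemma ind_c: "(indicator A t :: complex) = of_real (indicator A t)"
  by (simp add: indicator_def)

lemma sets_borel_Ioi: "sets (borel :: real measure) = sigma_sets UNIV (range greaterThan)"
  by (subst borel_Ioi) (simp add: sets_measure_of)

lemma apx_ind:
  assumes A: "A \<in> sets borel" shows "apx (\<lambda>t. indicator A t)"
proof -
  have Asig: "A \<in> sigma_sets UNIV (range greaterThan)" using A sets_borel_Ioi by simp
  have istab: "Int_stable (range (greaterThan :: real \<Rightarrow> real set))"
    unfolding Int_stable_def
  proof (intro ballI)
    fix X Y assume "X \<in> range (greaterThan :: real \<Rightarrow> real set)" "Y \<in> range (greaterThan :: real \<Rightarrow> real set)"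
    then obtain x y where "X = {x<..}" "Y = {y<..}" by auto
    then have "X \<inter> Y = {max x y<..}" by auto
    then show "X \<inter> Y \<in> range greaterThan" by auto
  qed
  have closed: "range greaterThan \<subseteq> Pow (UNIV :: real set)" by simp
  from istab closed Asig show ?thesis
  proof (induction rule: sigma_sets_induct_disjoint)
  next
    fix X :: "real set" assume "X \<in> range greaterThan"
    then obtain c where "X = {c<..}" by auto
    then show "apx (\<lambda>t. indicator X t)" using apx_ind_gt by simp
  next
    show "apx (\<lambda>t. indicator {} t)" using apx_const[of 0] by simp
  next
    fix X :: "real set" assume "apx (\<lambda>t. indicator X t)"
    then have "apx (\<lambda>t. 1 + (-1) * indicator X t)" by (intro apx_add apx_const apx_cmult)
    then show "apx (\<lambda>t. indicator (UNIV - X) t)" by (rule apx_cong) (simp add: indicator_def)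
  next
    fix X :: "nat \<Rightarrow> real set" assume disj: "disjoint_family X" and XS: "range X \<subseteq> sigma_sets UNIV (range greaterThan)"
      and IH: "\<And>i. apx (\<lambda>t. indicator (X i) t)"
    have Xb: "X i \<in> sets borel" for i using XS sets_borel_Ioi by auto
    have sm: "(\<lambda>i. indicator (X i) t :: real) sums indicator (\<Union>i. X i) t" for t
      using disj by (intro indicator_sums) (auto simp: disjoint_family_on_def)
    show "apx (\<lambda>t. indicator (\<Union>i. X i) t)"
    proof (rule apx_bounded_lim[where G="\<lambda>n t. \<Sum>i<n. indicator (X i) t" and B=1])
      show "\<And>n. apx (\<lambda>t. \<Sum>i<n. indicator (X i) t)" by (intro apx_sum IH)
      show "(\<lambda>t. indicator (\<Union>i. X i) t) \<in> borel_measurable \<mu>"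
        using Xb by (intro meas_borel borel_measurable_indicator) auto
    next
      fix t
      have "(\<lambda>n. complex_of_real (\<Sum>i<n. indicator (X i) t)) \<longlonglongrightarrow> complex_of_real (indicator (\<Union>i. X i) t)"
        using sm[of t] unfolding sums_def by (intro tendsto_of_real)
      then show "(\<lambda>n. \<Sum>i<n. indicator (X i) t) \<longlonglongrightarrow> (indicator (\<Union>i. X i) t :: complex)"
        by (simp only: ind_c of_real_sum)
    next
      fix n t
      have "(\<Sum>i<n. indicator (X i) t :: real) \<le> (\<Sum>i. indicator (X i) t)"
        using sm[of t] by (intro sum_le_suminf) (auto simp: sums_iff)
      also have "\<dots> \<le> 1" using sm[of t] by (simp add: sums_iff indicator_def)
      finally have le1: "(\<Sum>i<n. indicator (X i) t :: real) \<le> 1" .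
      have ge0: "(\<Sum>i<n. indicator (X i) t :: real) \<ge> 0" by (intro sum_nonneg) simp
      have "cmod (\<Sum>i<n. indicator (X i) t :: complex) \<le> (\<Sum>i<n. cmod (indicator (X i) t :: complex))"
        by (rule norm_sum)
      also have "\<dots> = (\<Sum>i<n. indicator (X i) t :: real)"
        by (intro sum.cong refl) (simp add: indicator_def)
      finally show "cmod (\<Sum>i<n. indicator (X i) t :: complex) \<le> 1" using le1 by simp
    qed
  qed
qed

lemma apx_simple:
  assumes F: "simple_function \<mu> F" shows "apx F"
proof -
  have sets: "F -` {v} \<inter> space \<mu> \<in> sets borel" for v
  proof -
    have "F -` {v} \<inter> space \<mu> \<in> sets (restrict_space borel {a..b})" using simple_functionD(2)[OF F, of "{v}"] unfolding st .
    then show ?thesis by (subst (asm) sets_restrict_space_iff) auto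
  qed
  have "apx (\<lambda>t. \<Sum>v\<in>F ` space \<mu>. v * indicator (F -` {v} \<inter> space \<mu>) t)"
    by (intro apx_sum apx_cmult apx_ind sets)
  then show ?thesis
  proof (rule apx_cong)
    fix t assume "t \<in> {a..b}"
    then have "t \<in> space \<mu>" using sp by simp
    then have "F t = (\<Sum>v\<in>F ` space \<mu>. indicator (F -` {v} \<inter> space \<mu>) t *\<^sub>R v)"
      by (rule simple_function_indicator_representation_banach[OF F])
    also have "\<dots> = (\<Sum>v\<in>F ` space \<mu>. v * indicator (F -` {v} \<inter> space \<mu>) t)"
      by (intro sum.cong refl) (simp add: scaleR_conv_of_real ind_c)
    finally show "(\<Sum>v\<in>F ` space \<mu>. v * indicator (F -` {v} \<inter> space \<mu>) t) = F t" by (rule sym)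
  qed
qed

lemma apx_L2:
  assumes g[measurable]: "g \<in> borel_measurable \<mu>" and gi: "(\<integral>\<^sup>+t. ennreal ((cmod (g t))\<^sup>2) \<partial>\<mu>) < \<infinity>"
  shows "apx g"
proof -
  obtain F where F: "\<And>i. simple_function \<mu> (F i)" "\<And>x. x \<in> space \<mu> \<Longrightarrow> (\<lambda>i. F i x) \<longlonglongrightarrow> g x"
    "\<And>i x. x \<in> space \<mu> \<Longrightarrow> dist (F i x) 0 \<le> 2 * dist (g x) 0"
    using borel_measurable_implies_sequence_metric[OF g, of 0] by blast
  show ?thesis
  proof (rule apx_seq[OF apx_simple[OF F(1)] g])
    show "(\<lambda>n. sqd \<mu> g (F n)) \<longlonglongrightarrow> 0"
    proof (rule sqd_dom[where w="\<lambda>t. 9 * (cmod (g t))\<^sup>2"])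
      show "\<And>n. F n \<in> borel_measurable \<mu>" using F(1) by (rule borel_measurable_simple_function)
      show "(\<lambda>t. 9 * (cmod (g t))\<^sup>2) \<in> borel_measurable \<mu>" by measurable
      have "(\<integral>\<^sup>+t. ennreal (9 * (cmod (g t))\<^sup>2) \<partial>\<mu>) = 9 * (\<integral>\<^sup>+t. ennreal ((cmod (g t))\<^sup>2) \<partial>\<mu>)"
        by (simp add: ennreal_mult nn_integral_cmult)
      also have "\<dots> < \<infinity>" using gi by (simp add: ennreal_mult_less_top less_top)
      finally show "(\<integral>\<^sup>+t. ennreal (9 * (cmod (g t))\<^sup>2) \<partial>\<mu>) < \<infinity>" .
    next
      fix t assume "t \<in> {a..b}"
      then show "(\<lambda>n. F n t) \<longlonglongrightarrow> g t" using F(2) sp by simp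
    next
      fix n t assume "t \<in> {a..b}"
      then have "cmod (F n t) \<le> 2 * cmod (g t)" using F(3)[of t n] sp by simp
      then have "cmod (g t - F n t) \<le> 3 * cmod (g t)" using norm_triangle_ineq4[of "g t" "F n t"] by simp
      then have "(cmod (g t - F n t))\<^sup>2 \<le> (3 * cmod (g t))\<^sup>2" by (intro power_mono) auto
      then show "(cmod (g t - F n t))\<^sup>2 \<le> 9 * (cmod (g t))\<^sup>2" by (simp add: power_mult_distrib)
    qed (rule g)
  qed
qed

end

theorem theorem3p4:
  fixes y :: "real \<Rightarrow> real" and a b L :: real
    and \<phi> :: "complex \<Rightarrow> real" and f :: "complex \<Rightarrow> complex" and \<epsilon> :: real
  assumes "a < b"
    and "L-lipschitz_on {a..b} y"
    and "\<phi> \<in> borel_measurable (arc_measure y a b)"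
    and "(\<integral>\<^sup>+ z. ennreal (exp (- \<phi> z)) \<partial>arc_measure y a b) < \<infinity>"
    and "f \<in> borel_measurable (arc_measure y a b)"
    and "(\<integral>\<^sup>+ z. ennreal ((cmod (f z))\<^sup>2 * exp (- \<phi> z)) \<partial>arc_measure y a b) < \<infinity>"
    and "\<epsilon> > 0"
  shows "\<exists>P :: complex poly.
           (\<integral>\<^sup>+ z. ennreal ((cmod (f z - poly P z))\<^sup>2 * exp (- \<phi> z)) \<partial>arc_measure y a b)
             < ennreal \<epsilon>"
proof -
  note lip = assms(2)
  interpret graph y a b L by unfold_locales (rule lip)
  define M where "M = restrict_space (interval_measure (arc_length_fun y a b)) {a..b}"
  have arc: "arc_measure y a b = distr M borel \<gamma>" unfolding arc_measure_def M_def by simp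
  have spM: "space M = {a..b}" unfolding M_def by (simp add: space_restrict_space)
  have stM: "sets M = sets (restrict_space borel {a..b})" unfolding M_def
    by (rule sets_restrict_space_cong) simp
  have gm: "\<gamma> \<in> measurable M borel"
    using borel_measurable_continuous_on_restrict[OF cont_gamma] measurable_cong_sets[OF stM refl] by blast
  have sets_arc: "sets (arc_measure y a b) = sets borel" unfolding arc by simp
  have phim[measurable]: "\<phi> \<in> borel_measurable borel" using assms(3) measurable_cong_sets[OF sets_arc refl] by blast
  have fm[measurable]: "f \<in> borel_measurable borel" using assms(5) measurable_cong_sets[OF sets_arc refl] by blast
  define W where "W t = exp (- \<phi> (\<gamma> t))" for t
  have Wm[measurable]: "W \<in> borel_measurable M" unfolding W_def using gm by measurable
  define \<mu> where "\<mu> = density M (\<lambda>t. ennreal (W t))"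
  have sp: "space \<mu> = {a..b}" unfolding \<mu>_def using spM by simp
  have st: "sets \<mu> = sets (restrict_space borel {a..b})" unfolding \<mu>_def using stM by simp
  have transfer: "(\<integral>\<^sup>+ z. ennreal (u z * exp (- \<phi> z)) \<partial>arc_measure y a b) = (\<integral>\<^sup>+ t. ennreal (u (\<gamma> t)) \<partial>\<mu>)"
    if um[measurable]: "u \<in> borel_measurable borel" and u0: "\<And>z. u z \<ge> 0" for u
  proof -
    have "(\<integral>\<^sup>+ z. ennreal (u z * exp (- \<phi> z)) \<partial>arc_measure y a b) = (\<integral>\<^sup>+ t. ennreal (u (\<gamma> t) * exp (- \<phi> (\<gamma> t))) \<partial>M)"
      unfolding arc by (rule nn_integral_distr[OF gm]) measurable
    also have "\<dots> = (\<integral>\<^sup>+ t. ennreal (W t) * ennreal (u (\<gamma> t)) \<partial>M)"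
      using u0 by (intro nn_integral_cong) (simp add: W_def ennreal_mult mult.commute)
    also have "\<dots> = (\<integral>\<^sup>+ t. ennreal (u (\<gamma> t)) \<partial>\<mu>)"
      unfolding \<mu>_def using gm by (intro nn_integral_density[symmetric]) measurable
    finally show ?thesis .
  qed
  have fin: "finite_measure \<mu>"
  proof
    have "emeasure \<mu> (space \<mu>) = (\<integral>\<^sup>+ t. ennreal 1 \<partial>\<mu>)" by simp
    also have "\<dots> = (\<integral>\<^sup>+ z. ennreal (1 * exp (- \<phi> z)) \<partial>arc_measure y a b)"
      by (rule transfer[symmetric]) auto
    also have "\<dots> < \<infinity>" using assms(4) by simp
    finally show "emeasure \<mu> (space \<mu>) \<noteq> \<infinity>" by simp
  qed
  interpret meas y a b L \<mu> by (intro meas.intro meas_axioms.intro graph.intro lip fin sp st)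
  define g where "g t = f (\<gamma> t)" for t
  have gmeas: "g \<in> borel_measurable \<mu>"
  proof -
    have "g \<in> borel_measurable M" unfolding g_def using gm by measurable
    then show ?thesis unfolding \<mu>_def by simp
  qed
  have gi: "(\<integral>\<^sup>+t. ennreal ((cmod (g t))\<^sup>2) \<partial>\<mu>) < \<infinity>"
    using assms(6) transfer[of "\<lambda>z. (cmod (f z))\<^sup>2"] unfolding g_def by simp
  have "apx g" by (rule apx_L2[OF gmeas gi])
  then obtain P where P: "sqd \<mu> g (\<lambda>t. poly P (\<gamma> t)) < ennreal \<epsilon>" using assms(7) unfolding apx_def by blast
  have "(\<integral>\<^sup>+ z. ennreal ((cmod (f z - poly P z))\<^sup>2 * exp (- \<phi> z)) \<partial>arc_measure y a b) = sqd \<mu> g (\<lambda>t. poly P (\<gamma> t))"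
    unfolding sqd_def g_def
  proof (rule transfer)
    have [measurable]: "poly P \<in> borel_measurable borel"
      by (intro borel_measurable_continuous_onI) (auto intro: continuous_intros)
    show "(\<lambda>z. (cmod (f z - poly P z))\<^sup>2) \<in> borel_measurable borel" by measurable
  qed simp
  then show ?thesis using P by (intro exI[of _ P]) simp
qed


end
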